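(* Let $f_1 \in \mathcal{F}_{\mu_1,L_1}(\mathbb{R}^d)$ and $f_2 \in \mathcal{F}_{\mu_2,L_2}(\mathbb{R}^d)$ with $\mu_1\in[0,\infty)$, $\mu_2\in\mathbb{R}$, such that $F=f_1-f_2$ is bounded below with $F_{lo}:=\inf F$, $\emptyset\ne\operatorname{dom}\partial f_1\subseteq\operatorname{dom}\partial f_2$ and $\operatorname{range}\partial f_2\subseteq\operatorname{range}\partial f_1$. Assume exactly one of $f_1,f_2$ is smooth (exactly one of $L_1, L_2$ is $\infty$), and $\mu_1+\mu_2>0$ or $\mu_1=\mu_2=0$. Run $N\ge1$ DCA iterations from $x^0$: for $k=0,\dots,N-1$ select $g_2^k\in\partial f_2(x^k)$, $x^{k+1}\in\operatorname{argmin}_w\{f_1(w)-\langle g_2^k,w\rangle\}$, $g_1^{k+1}:=g_2^k\in\partial f_1(x^{k+1})$; $g_1^0\in\partial f_1(x^0)$, $g_2^N\in\partial f_2(x^N)$ arbitrary. If the parameters lie in one of the domains below, with $p := \sigma+\sigma^+$, then $$\tfrac12\min_{0\le k\le N}\|g_1^k-g_2^k\|^2\le\frac{F(x^0)-F(x^N)}{pN},$$ and if moreover $L_1>\mu_2$, $\tfrac12\min_{0\le k\le N}\|g_1^k-g_2^k\|^2\le\frac{F(x^0)-F_{lo}}{pN+\frac{1}{L_1-\mu_2}}$. Domains and values: (a) $L_1=\infty>L_2\ge\mu_1\ge0$ and $\mu_2(\mu_1^{-1}+\mu_2^{-1}+L_2^{-1})\ge0$: $\sigma=0$, $\sigma^+=\frac{L_2+\mu_1}{L_2^2}$.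 (b) $L_2=\infty>L_1\ge\mu_2\ge0$ and $\mu_1(\mu_1^{-1}+\mu_2^{-1}+L_1^{-1})\ge0$: $\sigma=\frac{L_1+\mu_2}{L_1^2}$, $\sigma^+=0$. (c) $L_2=\infty$ and $\mu_1>-\mu_2>0$: $\sigma=\frac{L_1^{-1}(\mu_1^{-1}+\mu_2^{-1})}{\mu_1^{-1}+\mu_2^{-1}-L_1^{-1}}$, $\sigma^+=0$. (d) $L_1=\infty$, $\mu_1>-\mu_2>0$ and $\mu_1^{-1}+\mu_2^{-1}+L_2^{-1}>0$: $\sigma=0$, $\sigma^+=\frac{\mu_1+\mu_2}{\mu_2^2}$.
   Context: For $\mu\in\mathbb{R}$ and $L\in(\mu,\infty]$, $\mathcal{F}_{\mu,L}(\mathbb{R}^d)$ is the class of proper lower semicontinuous $f:\mathbb{R}^d\to\mathbb{R}$ with $f-\frac{\mu}{2}\|\cdot\|^2$ convex and, if $L<\infty$, $\frac{L}{2}\|\cdot\|^2-f$ convex ($L$ may be nonpositive; $L=\infty$ means no upper curvature condition, i.e. possibly nonsmooth). Subdifferential: $\partial f(x)=\{g+\mu x: g\in\partial(f-\frac{\mu}{2}\|\cdot\|^2)(x)\}$, equal to $\{\nabla f(x)\}$ where differentiable. $\operatorname{dom}\partial f=\{x:\partial f(x)\neq\emptyset\}$, $\operatorname{range}\partial f=\bigcup_x\partial f(x)$. Convention: $1/\infty=0$. *)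

theory Defs
  imports "HOL-Analysis.Analysis"
begin

definition lsc :: "('a::topological_space \<Rightarrow> real) \<Rightarrow> bool" where
  "lsc f \<longleftrightarrow> (\<forall>t. closed {x. f x \<le> t})"

definition FmuL :: "real \<Rightarrow> ereal \<Rightarrow> ('a::euclidean_space \<Rightarrow> real) set" where
  "FmuL \<mu> L = {f. lsc f
      \<and> convex_on UNIV (\<lambda>x. f x - \<mu> / 2 * (norm x)\<^sup>2)
      \<and> (L \<noteq> \<infinity> \<longrightarrow> convex_on UNIV (\<lambda>x. real_of_ereal L / 2 * (norm x)\<^sup>2 - f x))}"

definition subdiff :: "real \<Rightarrow> ('a::euclidean_space \<Rightarrow> real) \<Rightarrow> 'a \<Rightarrow> 'a set" where
  "subdiff \<mu> f x = {g + \<mu> *\<^sub>R x | g.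
      \<forall>y. f y - \<mu> / 2 * (norm y)\<^sup>2 \<ge> f x - \<mu> / 2 * (norm x)\<^sup>2 + g \<bullet> (y - x)}"

definition dom_subdiff :: "real \<Rightarrow> ('a::euclidean_space \<Rightarrow> real) \<Rightarrow> 'a set" where
  "dom_subdiff \<mu> f = {x. subdiff \<mu> f x \<noteq> {}}"

definition range_subdiff :: "real \<Rightarrow> ('a::euclidean_space \<Rightarrow> real) \<Rightarrow> 'a set" where
  "range_subdiff \<mu> f = (\<Union>x. subdiff \<mu> f x)"

text \<open>Inverses are taken in ereal, where inverse 0 = \<infinity> and
  inverse \<infinity> = 0 (so 1/\<infinity> = 0 as in the paper), and 0 * \<infinity> = 0.\<close>
definition dca_domain :: "real \<Rightarrow> real \<Rightarrow> ereal \<Rightarrow> ereal \<Rightarrow> real \<Rightarrow> real \<Rightarrow> bool" where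
  "dca_domain \<mu>1 \<mu>2 L1 L2 \<sigma> \<sigma>p \<longleftrightarrow>
     \<comment> \<open>(a)\<close>
     (L1 = \<infinity> \<and> L2 < \<infinity> \<and> L2 \<ge> ereal \<mu>1 \<and> \<mu>1 \<ge> 0
        \<and> ereal \<mu>2 * (inverse (ereal \<mu>1) + inverse (ereal \<mu>2) + inverse L2) \<ge> 0
        \<and> \<sigma> = 0 \<and> \<sigma>p = (real_of_ereal L2 + \<mu>1) / (real_of_ereal L2)\<^sup>2)
   \<or> \<comment> \<open>(b)\<close>
     (L2 = \<infinity> \<and> L1 < \<infinity> \<and> L1 \<ge> ereal \<mu>2 \<and> \<mu>2 \<ge> 0
        \<and> ereal \<mu>1 * (inverse (ereal \<mu>1) + inverse (ereal \<mu>2) + inverse L1) \<ge> 0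
        \<and> \<sigma> = (real_of_ereal L1 + \<mu>2) / (real_of_ereal L1)\<^sup>2 \<and> \<sigma>p = 0)
   \<or> \<comment> \<open>(c)\<close>
     (L2 = \<infinity> \<and> \<mu>1 > - \<mu>2 \<and> - \<mu>2 > 0
        \<and> \<sigma> = (inverse (real_of_ereal L1) * (inverse \<mu>1 + inverse \<mu>2))
               / (inverse \<mu>1 + inverse \<mu>2 - inverse (real_of_ereal L1))
        \<and> \<sigma>p = 0)
   \<or> \<comment> \<open>(d)\<close>
     (L1 = \<infinity> \<and> \<mu>1 > - \<mu>2 \<and> - \<mu>2 > 0
        \<and> ereal (inverse \<mu>1) + ereal (inverse \<mu>2) + inverse L2 > 0
        \<and> \<sigma> = 0 \<and> \<sigma>p = (\<mu>1 + \<mu>2) / \<mu>2\<^sup>2)"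

end

theory Submission
  imports Defs
begin

lemma eps_le:
  fixes a b c :: real
  assumes "\<And>t. 0 < t \<Longrightarrow> t \<le> 1 \<Longrightarrow> a \<le> b + t * c"
  shows "a \<le> b"
proof (rule ccontr)
  assume "\<not> a \<le> b"
  hence ab: "a > b" by simp
  show False
  proof (cases "c \<le> 0")
    case True
    with assms[of 1] show False using ab by simp
  next
    case False
    define t where "t = min 1 ((a - b) / (2 * c))"
    have t0: "0 < t" using ab False by (simp add: t_def)
    have t1: "t \<le> 1" by (simp add: t_def)
    have "t * c \<le> (a - b) / (2 * c) * c"
      using False by (intro mult_right_mono) (auto simp: t_def)
    also have "\<dots> = (a - b) / 2" using False by (simp add: field_simps)
    finally have "t * c \<le> (a - b) / 2" .
    have "a \<le> b + t * c" using assms[OF t0 t1] .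
    then show False using ab \<open>t * c \<le> (a - b) / 2\<close> by argo
  qed
qed

lemma subdiff_iff:
  "g \<in> subdiff \<mu> f x \<longleftrightarrow>
   (\<forall>y. f y - \<mu> / 2 * (norm y)\<^sup>2 \<ge> f x - \<mu> / 2 * (norm x)\<^sup>2 + (g - \<mu> *\<^sub>R x) \<bullet> (y - x))"
proof
  assume "g \<in> subdiff \<mu> f x"
  then obtain h where "g = h + \<mu> *\<^sub>R x" and
    "\<forall>y. f y - \<mu> / 2 * (norm y)\<^sup>2 \<ge> f x - \<mu> / 2 * (norm x)\<^sup>2 + h \<bullet> (y - x)"
    unfolding subdiff_def by blast
  then show "\<forall>y. f y - \<mu> / 2 * (norm y)\<^sup>2 \<ge> f x - \<mu> / 2 * (norm x)\<^sup>2 + (g - \<mu> *\<^sub>R x) \<bullet> (y - x)"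
    by simp
next
  assume "\<forall>y. f y - \<mu> / 2 * (norm y)\<^sup>2 \<ge> f x - \<mu> / 2 * (norm x)\<^sup>2 + (g - \<mu> *\<^sub>R x) \<bullet> (y - x)"
  then show "g \<in> subdiff \<mu> f x"
    unfolding subdiff_def by (intro CollectI exI[of _ "g - \<mu> *\<^sub>R x"]) simp
qed

lemma nsq_diff: "(norm (y - x))\<^sup>2 = (norm y)\<^sup>2 - 2 * (x \<bullet> y) + (norm x)\<^sup>2"
  for x y :: "'a::real_inner"
  by (simp add: power2_norm_eq_inner inner_diff_left inner_diff_right inner_commute)

lemma sub_lower:
  assumes "g \<in> subdiff \<mu> f x"
  shows "f x + g \<bullet> (y - x) + \<mu> / 2 * (norm (y - x))\<^sup>2 \<le> f y"
proof -
  have "f y - \<mu> / 2 * (norm y)\<^sup>2 \<ge> f x - \<mu> / 2 * (norm x)\<^sup>2 + (g - \<mu> *\<^sub>R x) \<bullet> (y - x)"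
    using assms by (simp add: subdiff_iff)
  moreover have "(g - \<mu> *\<^sub>R x) \<bullet> (y - x) = g \<bullet> (y - x) - \<mu> * (x \<bullet> y) + \<mu> * (norm x)\<^sup>2"
    by (simp add: inner_diff_left inner_diff_right power2_norm_eq_inner inner_commute algebra_simps)
  moreover have "\<mu> / 2 * (norm (y - x))\<^sup>2 = \<mu> / 2 * (norm y)\<^sup>2 - \<mu> * (x \<bullet> y) + \<mu> / 2 * (norm x)\<^sup>2"
    by (simp add: nsq_diff algebra_simps)
  ultimately show ?thesis by linarith
qed

lemma descent:
  fixes f :: "'a::euclidean_space \<Rightarrow> real"
  assumes f: "f \<in> FmuL \<mu> (ereal l)" and ml: "\<mu> \<le> l" and g: "g \<in> subdiff \<mu> f w"
  shows "f z \<le> f w + g \<bullet> (z - w) + l / 2 * (norm (z - w))\<^sup>2"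
proof -
  define k where "k = (\<lambda>x::'a. l / 2 * (norm x)\<^sup>2 - f x)"
  have cvx: "convex_on UNIV k" using f unfolding FmuL_def k_def by simp
  define d where "d = z - w"
  have key: "l * (w \<bullet> d) - g \<bullet> d \<le> (k (w + d) - k w) + t * ((l - \<mu>) / 2 * (d \<bullet> d))"
    if t0: "0 < t" and t1: "t \<le> 1" for t
  proof -
    have e1: "(1 - t) *\<^sub>R w + t *\<^sub>R (w + d) = w + t *\<^sub>R d" by (simp add: algebra_simps)
    have c1: "k (w + t *\<^sub>R d) \<le> (1 - t) * k w + t * k (w + d)"
      using convex_onD[OF cvx, of t w "w + d"] t0 t1 by (simp add: e1)
    have e2: "(1 - 1/2) *\<^sub>R (w + t *\<^sub>R d) + (1/2::real) *\<^sub>R (w - t *\<^sub>R d) = w"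
      by (simp add: algebra_simps flip: scaleR_add_left)
    have c2: "k w \<le> (1 - 1/2) * k (w + t *\<^sub>R d) + 1/2 * k (w - t *\<^sub>R d)"
      using convex_onD[OF cvx, of "1/2" "w + t *\<^sub>R d" "w - t *\<^sub>R d"] by (simp only: e2) simp
    have s: "f w + g \<bullet> ((w - t *\<^sub>R d) - w) + \<mu> / 2 * (norm ((w - t *\<^sub>R d) - w))\<^sup>2 \<le> f (w - t *\<^sub>R d)"
      by (rule sub_lower[OF g])
    have s': "f w - t * (g \<bullet> d) + \<mu> / 2 * (t\<^sup>2 * (d \<bullet> d)) \<le> f (w - t *\<^sub>R d)"
      using s by (simp add: power2_norm_eq_inner power_mult_distrib)
    have kw: "k (w - t *\<^sub>R d) = l / 2 * (w \<bullet> w) - l * (t * (w \<bullet> d)) + l / 2 * (t\<^sup>2 * (d \<bullet> d)) - f (w - t *\<^sub>R d)"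
    proof -
      have nw: "(norm (w - t *\<^sub>R d))\<^sup>2 = w \<bullet> w - 2 * (t * (w \<bullet> d)) + t\<^sup>2 * (d \<bullet> d)"
        unfolding power2_norm_eq_inner by (simp add: inner_diff_left inner_diff_right inner_commute algebra_simps power2_eq_square)
      show ?thesis unfolding k_def nw by (simp add: algebra_simps)
    qed
    have kw0: "k w = l / 2 * (w \<bullet> w) - f w" unfolding k_def by (simp add: power2_norm_eq_inner)
    have lower: "t * (l * (w \<bullet> d) - g \<bullet> d - t * ((l - \<mu>) / 2 * (d \<bullet> d))) \<le> k w - k (w - t *\<^sub>R d)"
    proof -
      have "k w - k (w - t *\<^sub>R d) = l * (t * (w \<bullet> d)) - l / 2 * (t\<^sup>2 * (d \<bullet> d)) - f w + f (w - t *\<^sub>R d)"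
        using kw kw0 by simp
      moreover have "t * (l * (w \<bullet> d) - g \<bullet> d - t * ((l - \<mu>) / 2 * (d \<bullet> d)))
          = l * (t * (w \<bullet> d)) - l / 2 * (t\<^sup>2 * (d \<bullet> d)) - t * (g \<bullet> d) + \<mu> / 2 * (t\<^sup>2 * (d \<bullet> d))"
        by (simp add: field_simps power2_eq_square)
      ultimately show ?thesis using s' by linarith
    qed
    have "t * (l * (w \<bullet> d) - g \<bullet> d - t * ((l - \<mu>) / 2 * (d \<bullet> d))) \<le> t * (k (w + d) - k w)"
      using lower c1 c2 by (simp add: algebra_simps)
    then have "l * (w \<bullet> d) - g \<bullet> d - t * ((l - \<mu>) / 2 * (d \<bullet> d)) \<le> k (w + d) - k w"
      using t0 by simp
    then show ?thesis by simp
  qed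
  have "l * (w \<bullet> d) - g \<bullet> d \<le> k (w + d) - k w"
    by (rule eps_le[of _ _ "(l - \<mu>) / 2 * (d \<bullet> d)"]) (use key in auto)
  moreover have "k (w + d) = l / 2 * (w \<bullet> w) + l * (w \<bullet> d) + l / 2 * (d \<bullet> d) - f z"
    unfolding k_def d_def by (simp add: power2_norm_eq_inner inner_add_left inner_add_right inner_commute algebra_simps)
  moreover have "k w = l / 2 * (w \<bullet> w) - f w" unfolding k_def by (simp add: power2_norm_eq_inner)
  ultimately show ?thesis unfolding d_def[symmetric] by (simp add: power2_norm_eq_inner)
qed

lemma quad_shift:
  fixes x y g :: "'a::real_inner"
  shows "\<mu> / 2 * (norm y)\<^sup>2 - \<mu> / 2 * (norm x)\<^sup>2 + (g - \<mu> *\<^sub>R x) \<bullet> (y - x)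
     = g \<bullet> (y - x) + \<mu> / 2 * (norm (y - x))\<^sup>2"
proof -
  have "(g - \<mu> *\<^sub>R x) \<bullet> (y - x) = g \<bullet> (y - x) - \<mu> * (x \<bullet> y) + \<mu> * (norm x)\<^sup>2"
    by (simp add: inner_diff_left inner_diff_right power2_norm_eq_inner inner_commute algebra_simps)
  moreover have "\<mu> / 2 * (norm (y - x))\<^sup>2 = \<mu> / 2 * (norm y)\<^sup>2 - \<mu> * (x \<bullet> y) + \<mu> / 2 * (norm x)\<^sup>2"
    by (simp add: nsq_diff algebra_simps)
  ultimately show ?thesis by linarith
qed

lemma interp:
  fixes f :: "'a::euclidean_space \<Rightarrow> real"
  assumes f: "f \<in> FmuL \<mu> (ereal l)" and ml: "\<mu> < l"
    and gx: "gx \<in> subdiff \<mu> f x" and gy: "gy \<in> subdiff \<mu> f y"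
  shows "f x + gx \<bullet> (y - x) + \<mu> / 2 * (norm (y - x))\<^sup>2
         + 1 / (2 * (l - \<mu>)) * (norm (gy - gx - \<mu> *\<^sub>R (y - x)))\<^sup>2 \<le> f y"
proof -
  define M where "M = l - \<mu>"
  have M0: "M > 0" using ml by (simp add: M_def)
  define u where "u = gx - \<mu> *\<^sub>R x"
  define v where "v = gy - \<mu> *\<^sub>R y"
  define h where "h = (\<lambda>z. f z - \<mu> / 2 * (norm z)\<^sup>2)"
  have vu: "v - u = gy - gx - \<mu> *\<^sub>R (y - x)" by (simp add: u_def v_def algebra_simps)
  have hsub: "h x + u \<bullet> (z - x) \<le> h z" for z
    using gx unfolding subdiff_iff h_def u_def by simp
  have hdesc: "h z \<le> h y + v \<bullet> (z - y) + M / 2 * (norm (z - y))\<^sup>2" for z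
  proof -
    have "f z \<le> f y + gy \<bullet> (z - y) + l / 2 * (norm (z - y))\<^sup>2"
      by (rule descent[OF f _ gy]) (use ml in simp)
    moreover have "\<mu> / 2 * (norm z)\<^sup>2 - \<mu> / 2 * (norm y)\<^sup>2 + (gy - \<mu> *\<^sub>R y) \<bullet> (z - y)
       = gy \<bullet> (z - y) + \<mu> / 2 * (norm (z - y))\<^sup>2" by (rule quad_shift)
    ultimately show ?thesis unfolding h_def v_def M_def by (simp add: algebra_simps diff_divide_distrib; linarith?)
  qed
  define q where "q = (norm (v - u))\<^sup>2"
  define r where "r = (1 / M) *\<^sub>R (v - u)"
  have r1: "v \<bullet> r - u \<bullet> r = q / M"
    unfolding r_def q_def power2_norm_eq_inner using M0 by (simp add: inner_diff_left inner_diff_right inner_commute field_simps)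
  have r2: "M / 2 * (norm r)\<^sup>2 = q / (2 * M)"
  proof -
    have "norm (v - u) = M * norm r" unfolding r_def using M0 by simp
    then show ?thesis unfolding q_def using M0 by (simp add: power2_eq_square)
  qed
  have A: "h x + u \<bullet> ((y - r) - x) \<le> h (y - r)" by (rule hsub)
  have B: "h (y - r) \<le> h y + v \<bullet> ((y - r) - y) + M / 2 * (norm ((y - r) - y))\<^sup>2" by (rule hdesc)
  have e1: "u \<bullet> ((y - r) - x) = u \<bullet> (y - x) - u \<bullet> r" by (simp add: inner_diff_right)
  have e2: "v \<bullet> ((y - r) - y) = - (v \<bullet> r)" by simp
  have e3: "M / 2 * (norm ((y - r) - y))\<^sup>2 = q / (2 * M)" using r2 by simp
  have e4: "q / M = 2 * (q / (2 * M))" using M0 by simp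
  have C: "h x + u \<bullet> (y - x) + q / (2 * M) \<le> h y"
    using A B r1 e1 e2 e3 e4 by linarith
  have D: "\<mu> / 2 * (norm y)\<^sup>2 - \<mu> / 2 * (norm x)\<^sup>2 + u \<bullet> (y - x)
       = gx \<bullet> (y - x) + \<mu> / 2 * (norm (y - x))\<^sup>2" unfolding u_def by (rule quad_shift)
  have E: "q / (2 * M) = 1 / (2 * (l - \<mu>)) * (norm (gy - gx - \<mu> *\<^sub>R (y - x)))\<^sup>2"
    by (simp add: q_def vu M_def)
  have hx: "h x = f x - \<mu> / 2 * (norm x)\<^sup>2" and hy: "h y = f y - \<mu> / 2 * (norm y)\<^sup>2"
    by (simp_all add: h_def)
  show ?thesis using C D E hx hy by linarith
qed

lemma argmin_subdiff:
  fixes f :: "'a::euclidean_space \<Rightarrow> real"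
  assumes f: "f \<in> FmuL \<mu> L" and mn: "\<And>w. f x' - g \<bullet> x' \<le> f w - g \<bullet> w"
  shows "g \<in> subdiff \<mu> f x'"
  unfolding subdiff_iff
proof
  fix y
  define h where "h = (\<lambda>z::'a. f z - \<mu> / 2 * (norm z)\<^sup>2)"
  have cvx: "convex_on UNIV h" using f unfolding FmuL_def h_def by simp
  define d where "d = y - x'"
  have key: "g \<bullet> d - \<mu> * (x' \<bullet> d) \<le> h y - h x' + t * (\<mu> / 2 * (d \<bullet> d))"
    if t0: "0 < t" and t1: "t \<le> 1" for t
  proof -
    have e1: "(1 - t) *\<^sub>R x' + t *\<^sub>R y = x' + t *\<^sub>R d" by (simp add: d_def algebra_simps)
    have c1: "h (x' + t *\<^sub>R d) \<le> (1 - t) * h x' + t * h y"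
      using convex_onD[OF cvx, of t x' y] t0 t1 by (simp add: e1)
    have m: "f x' - g \<bullet> x' \<le> f (x' + t *\<^sub>R d) - g \<bullet> (x' + t *\<^sub>R d)" by (rule mn)
    have nz: "(norm (x' + t *\<^sub>R d))\<^sup>2 = x' \<bullet> x' + 2 * (t * (x' \<bullet> d)) + t\<^sup>2 * (d \<bullet> d)"
      unfolding power2_norm_eq_inner by (simp add: inner_add_left inner_add_right inner_commute algebra_simps power2_eq_square)
    have fz: "f (x' + t *\<^sub>R d) = h (x' + t *\<^sub>R d) + \<mu> / 2 * (x' \<bullet> x') + \<mu> * (t * (x' \<bullet> d)) + \<mu> / 2 * (t\<^sup>2 * (d \<bullet> d))"
      unfolding h_def nz by (simp add: algebra_simps)
    have fx: "f x' = h x' + \<mu> / 2 * (x' \<bullet> x')" unfolding h_def by (simp add: power2_norm_eq_inner)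
    have gz: "g \<bullet> (x' + t *\<^sub>R d) = g \<bullet> x' + t * (g \<bullet> d)" by (simp add: inner_add_right)
    have "t * (g \<bullet> d - \<mu> * (x' \<bullet> d) - t * (\<mu> / 2 * (d \<bullet> d))) \<le> t * (h y - h x')"
    proof -
      have "t * (g \<bullet> d - \<mu> * (x' \<bullet> d) - t * (\<mu> / 2 * (d \<bullet> d)))
          = t * (g \<bullet> d) - \<mu> * (t * (x' \<bullet> d)) - \<mu> / 2 * (t\<^sup>2 * (d \<bullet> d))"
        by (simp add: field_simps power2_eq_square)
      moreover have "t * (h y - h x') = t * h y - t * h x'" by (simp add: algebra_simps)
      moreover have "h (x' + t *\<^sub>R d) \<le> h x' - t * h x' + t * h y" using c1 by (simp add: algebra_simps)
      ultimately show ?thesis using m fz fx gz by linarith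
    qed
    then have "g \<bullet> d - \<mu> * (x' \<bullet> d) - t * (\<mu> / 2 * (d \<bullet> d)) \<le> h y - h x'"
      using t0 by simp
    then show ?thesis by simp
  qed
  have "g \<bullet> d - \<mu> * (x' \<bullet> d) \<le> h y - h x'"
    by (rule eps_le[of _ _ "\<mu> / 2 * (d \<bullet> d)"]) (use key in auto)
  moreover have "(g - \<mu> *\<^sub>R x') \<bullet> (y - x') = g \<bullet> d - \<mu> * (x' \<bullet> d)"
    by (simp add: d_def inner_diff_left)
  ultimately show "f y - \<mu> / 2 * (norm y)\<^sup>2 \<ge> f x' - \<mu> / 2 * (norm x')\<^sup>2 + (g - \<mu> *\<^sub>R x') \<bullet> (y - x')"
    unfolding h_def by linarith
qed

lemma scal_a:
  fixes fx1 fy1 fx2 fy2 c p e hh \<mu>1 \<mu>2 l \<omega> \<sigma>p :: real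
  assumes I1: "fy1 - c + \<mu>1 / 2 * e \<le> fx1"
    and J1: "fx2 + c + \<mu>2 / 2 * e + (hh - 2 * \<mu>2 * p + \<mu>2\<^sup>2 * e) / (2 * (l - \<mu>2)) \<le> fy2"
    and J2: "fy2 - (c + p) + \<mu>2 / 2 * e + (hh - 2 * \<mu>2 * p + \<mu>2\<^sup>2 * e) / (2 * (l - \<mu>2)) \<le> fx2"
    and S: "0 \<le> e - 2 * \<omega> * p + \<omega>\<^sup>2 * hh"
    and om: "\<omega> = 1 / l" and l0: "0 < l" and ml: "\<mu>2 < l" and m1: "0 \<le> \<mu>1"
    and K: "0 \<le> \<mu>1 * l + \<mu>2 * l + \<mu>1 * \<mu>2"
    and sp: "\<sigma>p = (l + \<mu>1) / l\<^sup>2"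
  shows "\<sigma>p / 2 * hh \<le> (fx1 - fx2) - (fy1 - fy2)"
proof -
  define R where "R = \<mu>2 / 2 * e + (hh - 2 * \<mu>2 * p + \<mu>2\<^sup>2 * e) / (2 * (l - \<mu>2))"
  define \<alpha> where "\<alpha> = 1 + \<mu>1 / l"
  define \<beta> where "\<beta> = \<mu>1 / l"
  define \<kappa> where "\<kappa> = (\<mu>1 * l + \<mu>2 * l + \<mu>1 * \<mu>2) / (2 * (l - \<mu>2))"
  have M0: "l - \<mu>2 \<noteq> 0" using ml by simp
  have id: "(fx1 - fx2) - (fy1 - fy2) - \<sigma>p / 2 * hh
     = (fx1 - (fy1 - c + \<mu>1 / 2 * e)) + \<alpha> * (fy2 - (fx2 + c + R)) + \<beta> * (fx2 - (fy2 - (c + p) + R))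
       + \<kappa> * (e - 2 * \<omega> * p + \<omega>\<^sup>2 * hh)"
  proof -
    have il: "l * inverse l = 1" using l0 by simp
    have iM: "(l - \<mu>2) * inverse (l - \<mu>2) = 1" using M0 by simp
    show ?thesis
      unfolding R_def \<alpha>_def \<beta>_def \<kappa>_def om sp divide_inverse inverse_mult_distrib power2_eq_square
      using il iM by algebra
  qed
  have "0 \<le> \<alpha> * (fy2 - (fx2 + c + R))"
    using J1 l0 m1 unfolding \<alpha>_def R_def by (intro mult_nonneg_nonneg) auto
  moreover have "0 \<le> \<beta> * (fx2 - (fy2 - (c + p) + R))"
    using J2 l0 m1 unfolding \<beta>_def R_def by (intro mult_nonneg_nonneg) auto
  moreover have "0 \<le> \<kappa> * (e - 2 * \<omega> * p + \<omega>\<^sup>2 * hh)"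
    using S K ml unfolding \<kappa>_def by (intro mult_nonneg_nonneg) auto
  ultimately show ?thesis using id I1 by linarith
qed
lemma scal_d:
  fixes fx1 fy1 fx2 fy2 c p e hh \<mu>1 \<mu>2 l \<omega> \<sigma>p :: real
  assumes I1: "fy1 - c + \<mu>1 / 2 * e \<le> fx1"
    and J1: "fx2 + c + \<mu>2 / 2 * e + (hh - 2 * \<mu>2 * p + \<mu>2\<^sup>2 * e) / (2 * (l - \<mu>2)) \<le> fy2"
    and J2: "fy2 - (c + p) + \<mu>2 / 2 * e + (hh - 2 * \<mu>2 * p + \<mu>2\<^sup>2 * e) / (2 * (l - \<mu>2)) \<le> fx2"
    and S: "0 \<le> e - 2 * \<omega> * p + \<omega>\<^sup>2 * hh"
    and om: "\<omega> = 1 / \<mu>2" and m2: "\<mu>2 < 0" and ml: "\<mu>2 < l" and m12: "0 < \<mu>1 + \<mu>2"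
    and K: "\<mu>1 * l + \<mu>2 * l + \<mu>1 * \<mu>2 \<le> 0"
    and sp: "\<sigma>p = (\<mu>1 + \<mu>2) / \<mu>2\<^sup>2"
  shows "\<sigma>p / 2 * hh \<le> (fx1 - fx2) - (fy1 - fy2)"
proof -
  define R where "R = \<mu>2 / 2 * e + (hh - 2 * \<mu>2 * p + \<mu>2\<^sup>2 * e) / (2 * (l - \<mu>2))"
  define \<alpha> where "\<alpha> = - \<mu>1 / \<mu>2"
  define \<beta> where "\<beta> = - (\<mu>1 + \<mu>2) / \<mu>2"
  define \<kappa> where "\<kappa> = - (\<mu>1 * l + \<mu>2 * l + \<mu>1 * \<mu>2) / (2 * (l - \<mu>2))"
  have M0: "l - \<mu>2 \<noteq> 0" using ml by simp
  have id: "(fx1 - fx2) - (fy1 - fy2) - \<sigma>p / 2 * hh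
     = (fx1 - (fy1 - c + \<mu>1 / 2 * e)) + \<alpha> * (fy2 - (fx2 + c + R)) + \<beta> * (fx2 - (fy2 - (c + p) + R))
       + \<kappa> * (e - 2 * \<omega> * p + \<omega>\<^sup>2 * hh)"
  proof -
    have il: "\<mu>2 * inverse \<mu>2 = 1" using m2 by simp
    have iM: "(l - \<mu>2) * inverse (l - \<mu>2) = 1" using M0 by simp
    show ?thesis
      unfolding R_def \<alpha>_def \<beta>_def \<kappa>_def om sp divide_inverse inverse_mult_distrib power2_eq_square
        inverse_minus_eq
      using il iM by algebra
  qed
  have a0: "0 \<le> \<alpha>" unfolding \<alpha>_def using m2 m12 by (intro divide_nonpos_neg) auto
  have b0: "0 \<le> \<beta>" unfolding \<beta>_def using m2 m12 by (intro divide_nonpos_neg) auto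
  have "0 \<le> \<alpha> * (fy2 - (fx2 + c + R))"
    using J1 a0 unfolding R_def by (intro mult_nonneg_nonneg) auto
  moreover have "0 \<le> \<beta> * (fx2 - (fy2 - (c + p) + R))"
    using J2 b0 unfolding R_def by (intro mult_nonneg_nonneg) auto
  moreover have "0 \<le> \<kappa> * (e - 2 * \<omega> * p + \<omega>\<^sup>2 * hh)"
    using S K ml unfolding \<kappa>_def by (intro mult_nonneg_nonneg) auto
  ultimately show ?thesis using id I1 by linarith
qed

lemma scal_b:
  fixes fx1 fy1 fx2 fy2 c p e hh \<mu>1 \<mu>2 l \<omega> \<sigma> :: real
  assumes I2: "fx2 - c + \<mu>2 / 2 * e \<le> fy2"
    and J1: "fy1 + c + \<mu>1 / 2 * e + (hh - 2 * \<mu>1 * p + \<mu>1\<^sup>2 * e) / (2 * (l - \<mu>1)) \<le> fx1"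
    and J2: "fx1 - (c + p) + \<mu>1 / 2 * e + (hh - 2 * \<mu>1 * p + \<mu>1\<^sup>2 * e) / (2 * (l - \<mu>1)) \<le> fy1"
    and S: "0 \<le> e - 2 * \<omega> * p + \<omega>\<^sup>2 * hh"
    and om: "\<omega> = 1 / l" and l0: "0 < l" and ml: "\<mu>1 < l" and m2: "0 \<le> \<mu>2"
    and K: "0 \<le> \<mu>1 * l + \<mu>2 * l + \<mu>1 * \<mu>2"
    and sg: "\<sigma> = (l + \<mu>2) / l\<^sup>2"
  shows "\<sigma> / 2 * hh \<le> (fx1 - fx2) - (fy1 - fy2)"
proof -
  define R where "R = \<mu>1 / 2 * e + (hh - 2 * \<mu>1 * p + \<mu>1\<^sup>2 * e) / (2 * (l - \<mu>1))"
  define \<alpha> where "\<alpha> = 1 + \<mu>2 / l"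
  define \<beta> where "\<beta> = \<mu>2 / l"
  define \<kappa> where "\<kappa> = (\<mu>1 * l + \<mu>2 * l + \<mu>1 * \<mu>2) / (2 * (l - \<mu>1))"
  have M0: "l - \<mu>1 \<noteq> 0" using ml by simp
  have id: "(fx1 - fx2) - (fy1 - fy2) - \<sigma> / 2 * hh
     = (fy2 - (fx2 - c + \<mu>2 / 2 * e)) + \<alpha> * (fx1 - (fy1 + c + R)) + \<beta> * (fy1 - (fx1 - (c + p) + R))
       + \<kappa> * (e - 2 * \<omega> * p + \<omega>\<^sup>2 * hh)"
  proof -
    have il: "l * inverse l = 1" using l0 by simp
    have iM: "(l - \<mu>1) * inverse (l - \<mu>1) = 1" using M0 by simp
    show ?thesis
      unfolding R_def \<alpha>_def \<beta>_def \<kappa>_def om sg divide_inverse inverse_mult_distrib power2_eq_square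
      using il iM by algebra
  qed
  have "0 \<le> \<alpha> * (fx1 - (fy1 + c + R))"
    using J1 l0 m2 unfolding \<alpha>_def R_def by (intro mult_nonneg_nonneg) auto
  moreover have "0 \<le> \<beta> * (fy1 - (fx1 - (c + p) + R))"
    using J2 l0 m2 unfolding \<beta>_def R_def by (intro mult_nonneg_nonneg) auto
  moreover have "0 \<le> \<kappa> * (e - 2 * \<omega> * p + \<omega>\<^sup>2 * hh)"
    using S K ml unfolding \<kappa>_def by (intro mult_nonneg_nonneg) auto
  ultimately show ?thesis using id I2 by linarith
qed

lemma scal_c:
  fixes fx1 fy1 fx2 fy2 c p e hh \<mu>1 \<mu>2 l \<omega> \<sigma> T :: real
  assumes I2: "fx2 - c + \<mu>2 / 2 * e \<le> fy2"
    and J1: "fy1 + c + \<mu>1 / 2 * e + (hh - 2 * \<mu>1 * p + \<mu>1\<^sup>2 * e) / (2 * (l - \<mu>1)) \<le> fx1"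
    and S: "0 \<le> e - 2 * \<omega> * p + \<omega>\<^sup>2 * hh"
    and T: "T = (\<mu>1 + \<mu>2) * l - \<mu>1 * \<mu>2"
    and om: "\<omega> = \<mu>1 / T" and ml: "\<mu>1 < l" and m12: "0 < \<mu>1 + \<mu>2"
    and sg: "\<sigma> = (\<mu>1 + \<mu>2) / T"
  shows "\<sigma> / 2 * hh \<le> (fx1 - fx2) - (fy1 - fy2)"
proof -
  define R where "R = \<mu>1 / 2 * e + (hh - 2 * \<mu>1 * p + \<mu>1\<^sup>2 * e) / (2 * (l - \<mu>1))"
  define \<kappa> where "\<kappa> = T / (2 * (l - \<mu>1))"
  have M0: "l - \<mu>1 \<noteq> 0" using ml by simp
  have Teq: "T = (\<mu>1 + \<mu>2) * (l - \<mu>1) + \<mu>1 * \<mu>1" unfolding T by (simp add: algebra_simps)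
  have "(\<mu>1 + \<mu>2) * (l - \<mu>1) > 0" using ml m12 by (intro mult_pos_pos) auto
  moreover have "\<mu>1 * \<mu>1 \<ge> 0" by simp
  ultimately have Tpos: "T > 0" unfolding Teq by linarith
  have id: "(fx1 - fx2) - (fy1 - fy2) - \<sigma> / 2 * hh
     = (fy2 - (fx2 - c + \<mu>2 / 2 * e)) + (fx1 - (fy1 + c + R))
       + \<kappa> * (e - 2 * \<omega> * p + \<omega>\<^sup>2 * hh)"
  proof -
    have il: "T * inverse T = 1" using Tpos by simp
    have iM: "(l - \<mu>1) * inverse (l - \<mu>1) = 1" using M0 by simp
    show ?thesis
      unfolding R_def \<kappa>_def om sg divide_inverse inverse_mult_distrib power2_eq_square
      using il iM T by algebra
  qed
  have "0 \<le> fx1 - (fy1 + c + R)" using J1 unfolding R_def by auto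
  moreover have "0 \<le> \<kappa> * (e - 2 * \<omega> * p + \<omega>\<^sup>2 * hh)"
    using S Tpos ml unfolding \<kappa>_def by (intro mult_nonneg_nonneg) auto
  ultimately show ?thesis using id I2 by linarith
qed


lemma nsq_lin:
  fixes u v :: "'a::real_inner"
  shows "(norm (u - a *\<^sub>R v))\<^sup>2 = (norm u)\<^sup>2 - 2 * a * (u \<bullet> v) + a\<^sup>2 * (norm v)\<^sup>2"
  unfolding power2_norm_eq_inner
  by (simp add: inner_diff_left inner_diff_right inner_commute algebra_simps power2_eq_square)

lemma step_ad:
  fixes f1 f2 :: "'a::euclidean_space \<Rightarrow> real"
  assumes f2: "f2 \<in> FmuL \<mu>2 (ereal l)" and ml: "\<mu>2 < l"
    and gy1: "g \<in> subdiff \<mu>1 f1 y" and gx2: "g \<in> subdiff \<mu>2 f2 x" and by2: "b1 \<in> subdiff \<mu>2 f2 y"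
    and cs: "(0 < l \<and> 0 \<le> \<mu>1 \<and> 0 \<le> \<mu>1 * l + \<mu>2 * l + \<mu>1 * \<mu>2 \<and> \<sigma>p = (l + \<mu>1) / l\<^sup>2)
           \<or> (\<mu>2 < 0 \<and> 0 < \<mu>1 + \<mu>2 \<and> \<mu>1 * l + \<mu>2 * l + \<mu>1 * \<mu>2 \<le> 0 \<and> \<sigma>p = (\<mu>1 + \<mu>2) / \<mu>2\<^sup>2)"
  shows "\<sigma>p / 2 * (norm (g - b1))\<^sup>2 \<le> (f1 x - f2 x) - (f1 y - f2 y)"
proof -
  define E where "E = y - x"
  define H where "H = b1 - g"
  define c where "c = g \<bullet> E"
  define p where "p = H \<bullet> E"
  define e where "e = (norm E)\<^sup>2"
  define hh where "hh = (norm H)\<^sup>2"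
  have I1: "f1 y + g \<bullet> (x - y) + \<mu>1 / 2 * (norm (x - y))\<^sup>2 \<le> f1 x" by (rule sub_lower[OF gy1])
  have J1: "f2 x + g \<bullet> (y - x) + \<mu>2 / 2 * (norm (y - x))\<^sup>2
         + 1 / (2 * (l - \<mu>2)) * (norm (b1 - g - \<mu>2 *\<^sub>R (y - x)))\<^sup>2 \<le> f2 y"
    by (rule interp[OF f2 ml gx2 by2])
  have J2: "f2 y + b1 \<bullet> (x - y) + \<mu>2 / 2 * (norm (x - y))\<^sup>2
         + 1 / (2 * (l - \<mu>2)) * (norm (g - b1 - \<mu>2 *\<^sub>R (x - y)))\<^sup>2 \<le> f2 x"
    by (rule interp[OF f2 ml by2 gx2])
  have xy: "x - y = - E" by (simp add: E_def)
  have c1: "g \<bullet> (x - y) = - c" unfolding xy c_def by simp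
  have c2: "(norm (x - y))\<^sup>2 = e" unfolding xy e_def by simp
  have c3: "(norm (b1 - g - \<mu>2 *\<^sub>R (y - x)))\<^sup>2 = hh - 2 * \<mu>2 * p + \<mu>2\<^sup>2 * e"
    unfolding H_def[symmetric] E_def[symmetric] hh_def p_def e_def nsq_lin by (simp add: inner_commute)
  have c4: "(norm (g - b1 - \<mu>2 *\<^sub>R (x - y)))\<^sup>2 = hh - 2 * \<mu>2 * p + \<mu>2\<^sup>2 * e"
  proof -
    have "g - b1 - \<mu>2 *\<^sub>R (x - y) = - (H - \<mu>2 *\<^sub>R E)" by (simp add: H_def E_def algebra_simps)
    then show ?thesis unfolding hh_def p_def e_def by (simp only: norm_minus_cancel nsq_lin)
  qed
  have c5: "b1 \<bullet> (x - y) = - (c + p)"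
  proof -
    have "b1 = g + H" by (simp add: H_def)
    then show ?thesis unfolding xy c_def p_def by (simp add: inner_add_left)
  qed
  have c6: "(norm (y - x))\<^sup>2 = e" unfolding E_def e_def ..
  have hg: "(norm (g - b1))\<^sup>2 = hh" unfolding hh_def H_def by (simp add: norm_minus_commute)
  have I1': "f1 y - c + \<mu>1 / 2 * e \<le> f1 x" using I1 c1 c2 by simp
  have J1': "f2 x + c + \<mu>2 / 2 * e + (hh - 2 * \<mu>2 * p + \<mu>2\<^sup>2 * e) / (2 * (l - \<mu>2)) \<le> f2 y"
    using J1 unfolding c3 c6 by (simp add: c_def E_def)
  have J2': "f2 y - (c + p) + \<mu>2 / 2 * e + (hh - 2 * \<mu>2 * p + \<mu>2\<^sup>2 * e) / (2 * (l - \<mu>2)) \<le> f2 x"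
    using J2 unfolding c4 c5 c2 by simp
  have sq: "0 \<le> e - 2 * \<omega> * p + \<omega>\<^sup>2 * hh" for \<omega>
  proof -
    have "0 \<le> (norm (E - \<omega> *\<^sub>R H))\<^sup>2" by simp
    then show ?thesis unfolding nsq_lin e_def hh_def p_def by (simp add: inner_commute)
  qed
  have "\<sigma>p / 2 * hh \<le> (f1 x - f2 x) - (f1 y - f2 y)"
    using cs
  proof
    assume a: "0 < l \<and> 0 \<le> \<mu>1 \<and> 0 \<le> \<mu>1 * l + \<mu>2 * l + \<mu>1 * \<mu>2 \<and> \<sigma>p = (l + \<mu>1) / l\<^sup>2"
    show ?thesis
      by (rule scal_a[OF I1' J1' J2' sq[of "1 / l"]]) (use a ml in auto)
  next
    assume d: "\<mu>2 < 0 \<and> 0 < \<mu>1 + \<mu>2 \<and> \<mu>1 * l + \<mu>2 * l + \<mu>1 * \<mu>2 \<le> 0 \<and> \<sigma>p = (\<mu>1 + \<mu>2) / \<mu>2\<^sup>2"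
    show ?thesis
      by (rule scal_d[OF I1' J1' J2' sq[of "1 / \<mu>2"]]) (use d ml in auto)
  qed
  then show ?thesis using hg by simp
qed

lemma step_bc:
  fixes f1 f2 :: "'a::euclidean_space \<Rightarrow> real"
  assumes f1: "f1 \<in> FmuL \<mu>1 (ereal l)" and ml: "\<mu>1 < l"
    and ax1: "a0 \<in> subdiff \<mu>1 f1 x" and gy1: "g \<in> subdiff \<mu>1 f1 y" and gx2: "g \<in> subdiff \<mu>2 f2 x"
    and cs: "(0 < l \<and> 0 \<le> \<mu>2 \<and> 0 \<le> \<mu>1 * l + \<mu>2 * l + \<mu>1 * \<mu>2 \<and> \<sigma> = (l + \<mu>2) / l\<^sup>2)
           \<or> (0 < \<mu>1 + \<mu>2 \<and> \<sigma> = (\<mu>1 + \<mu>2) / ((\<mu>1 + \<mu>2) * l - \<mu>1 * \<mu>2))"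
  shows "\<sigma> / 2 * (norm (a0 - g))\<^sup>2 \<le> (f1 x - f2 x) - (f1 y - f2 y)"
proof -
  define E where "E = x - y"
  define G where "G = a0 - g"
  define c where "c = g \<bullet> E"
  define p where "p = G \<bullet> E"
  define e where "e = (norm E)\<^sup>2"
  define hh where "hh = (norm G)\<^sup>2"
  have I2: "f2 x + g \<bullet> (y - x) + \<mu>2 / 2 * (norm (y - x))\<^sup>2 \<le> f2 y" by (rule sub_lower[OF gx2])
  have J1: "f1 y + g \<bullet> (x - y) + \<mu>1 / 2 * (norm (x - y))\<^sup>2
         + 1 / (2 * (l - \<mu>1)) * (norm (a0 - g - \<mu>1 *\<^sub>R (x - y)))\<^sup>2 \<le> f1 x"
    by (rule interp[OF f1 ml gy1 ax1])
  have J2: "f1 x + a0 \<bullet> (y - x) + \<mu>1 / 2 * (norm (y - x))\<^sup>2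
         + 1 / (2 * (l - \<mu>1)) * (norm (g - a0 - \<mu>1 *\<^sub>R (y - x)))\<^sup>2 \<le> f1 y"
    by (rule interp[OF f1 ml ax1 gy1])
  have yx: "y - x = - E" by (simp add: E_def)
  have c1: "g \<bullet> (y - x) = - c" unfolding yx c_def by simp
  have c2: "(norm (y - x))\<^sup>2 = e" unfolding yx e_def by simp
  have c3: "(norm (a0 - g - \<mu>1 *\<^sub>R (x - y)))\<^sup>2 = hh - 2 * \<mu>1 * p + \<mu>1\<^sup>2 * e"
    unfolding G_def[symmetric] E_def[symmetric] hh_def p_def e_def nsq_lin by (simp add: inner_commute)
  have c4: "(norm (g - a0 - \<mu>1 *\<^sub>R (y - x)))\<^sup>2 = hh - 2 * \<mu>1 * p + \<mu>1\<^sup>2 * e"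
  proof -
    have "g - a0 - \<mu>1 *\<^sub>R (y - x) = - (G - \<mu>1 *\<^sub>R E)" by (simp add: G_def E_def algebra_simps)
    then show ?thesis unfolding hh_def p_def e_def by (simp only: norm_minus_cancel nsq_lin)
  qed
  have c5: "a0 \<bullet> (y - x) = - (c + p)"
  proof -
    have "a0 = g + G" by (simp add: G_def)
    then show ?thesis unfolding yx c_def p_def by (simp add: inner_add_left)
  qed
  have c6: "(norm (x - y))\<^sup>2 = e" unfolding E_def e_def ..
  have I2': "f2 x - c + \<mu>2 / 2 * e \<le> f2 y" using I2 c1 c2 by simp
  have J1': "f1 y + c + \<mu>1 / 2 * e + (hh - 2 * \<mu>1 * p + \<mu>1\<^sup>2 * e) / (2 * (l - \<mu>1)) \<le> f1 x"
    using J1 unfolding c3 c6 by (simp add: c_def E_def)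
  have J2': "f1 x - (c + p) + \<mu>1 / 2 * e + (hh - 2 * \<mu>1 * p + \<mu>1\<^sup>2 * e) / (2 * (l - \<mu>1)) \<le> f1 y"
    using J2 unfolding c4 c5 c2 by simp
  have sq: "0 \<le> e - 2 * \<omega> * p + \<omega>\<^sup>2 * hh" for \<omega>
  proof -
    have "0 \<le> (norm (E - \<omega> *\<^sub>R G))\<^sup>2" by simp
    then show ?thesis unfolding nsq_lin e_def hh_def p_def by (simp add: inner_commute)
  qed
  have "\<sigma> / 2 * hh \<le> (f1 x - f2 x) - (f1 y - f2 y)"
    using cs
  proof
    assume b: "0 < l \<and> 0 \<le> \<mu>2 \<and> 0 \<le> \<mu>1 * l + \<mu>2 * l + \<mu>1 * \<mu>2 \<and> \<sigma> = (l + \<mu>2) / l\<^sup>2"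
    show ?thesis
      by (rule scal_b[OF I2' J1' J2' sq[of "1 / l"]]) (use b ml in auto)
  next
    assume cc: "0 < \<mu>1 + \<mu>2 \<and> \<sigma> = (\<mu>1 + \<mu>2) / ((\<mu>1 + \<mu>2) * l - \<mu>1 * \<mu>2)"
    show ?thesis
      by (rule scal_c[OF I2' J1' sq[of "\<mu>1 / ((\<mu>1 + \<mu>2) * l - \<mu>1 * \<mu>2)"] refl]) (use cc ml in auto)
  qed
  then show ?thesis by (simp add: hh_def G_def)
qed

lemma params:
  assumes L1: "ereal \<mu>1 < L1" and L2: "ereal \<mu>2 < L2"
    and mu1: "\<mu>1 \<ge> 0"
    and one_smooth: "(L1 = \<infinity>) \<noteq> (L2 = \<infinity>)"
    and mus: "\<mu>1 + \<mu>2 > 0 \<or> (\<mu>1 = 0 \<and> \<mu>2 = 0)"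
    and dom: "dca_domain \<mu>1 \<mu>2 L1 L2 \<sigma> \<sigma>p"
  shows "(\<exists>l. L2 = ereal l \<and> \<mu>2 < l \<and> \<sigma> = 0 \<and>
            ((0 < l \<and> 0 \<le> \<mu>1 \<and> 0 \<le> \<mu>1 * l + \<mu>2 * l + \<mu>1 * \<mu>2 \<and> \<sigma>p = (l + \<mu>1) / l\<^sup>2)
           \<or> (\<mu>2 < 0 \<and> 0 < \<mu>1 + \<mu>2 \<and> \<mu>1 * l + \<mu>2 * l + \<mu>1 * \<mu>2 \<le> 0 \<and> \<sigma>p = (\<mu>1 + \<mu>2) / \<mu>2\<^sup>2)))
       \<or> (\<exists>l. L1 = ereal l \<and> \<mu>1 < l \<and> \<sigma>p = 0 \<and>
            ((0 < l \<and> 0 \<le> \<mu>2 \<and> 0 \<le> \<mu>1 * l + \<mu>2 * l + \<mu>1 * \<mu>2 \<and> \<sigma> = (l + \<mu>2) / l\<^sup>2)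
           \<or> (0 < \<mu>1 + \<mu>2 \<and> \<sigma> = (\<mu>1 + \<mu>2) / ((\<mu>1 + \<mu>2) * l - \<mu>1 * \<mu>2))))"
  using dom unfolding dca_domain_def
proof (elim disjE conjE)
  assume a1: "L1 = \<infinity>" and a2: "L2 < \<infinity>" and a3: "ereal \<mu>1 \<le> L2" and a4: "0 \<le> \<mu>1"
    and a5: "0 \<le> ereal \<mu>2 * (inverse (ereal \<mu>1) + inverse (ereal \<mu>2) + inverse L2)"
    and a6: "\<sigma> = 0" and a7: "\<sigma>p = (real_of_ereal L2 + \<mu>1) / (real_of_ereal L2)\<^sup>2"
  obtain l where l: "L2 = ereal l" using a2 a3 by (cases L2) auto
  have ml: "\<mu>2 < l" using L2 l by simp
  have m1l: "\<mu>1 \<le> l" using a3 l by simp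
  have l0: "0 < l"
  proof (rule ccontr)
    assume "\<not> 0 < l"
    then have "l = 0" "\<mu>1 = 0" using m1l a4 by auto
    then show False using mus ml by auto
  qed
  have K: "0 \<le> \<mu>1 * l + \<mu>2 * l + \<mu>1 * \<mu>2"
  proof (cases "\<mu>2 = 0")
    case True then show ?thesis using a4 l0 by simp
  next
    case m2: False
    show ?thesis
    proof (cases "\<mu>1 = 0")
      case True
      then have "0 \<le> \<mu>2" using mus by auto
      then show ?thesis using True l0 by simp
    next
      case m1: False
      have "0 \<le> \<mu>2 * (inverse \<mu>1 + inverse \<mu>2 + inverse l)"
        using a5 m1 m2 l0 unfolding l by simp
      then have "0 \<le> (\<mu>1 * l) * (\<mu>2 * (inverse \<mu>1 + inverse \<mu>2 + inverse l))"
        using a4 l0 by simp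
      also have "(\<mu>1 * l) * (\<mu>2 * (inverse \<mu>1 + inverse \<mu>2 + inverse l)) = \<mu>1 * l + \<mu>2 * l + \<mu>1 * \<mu>2"
        using m1 m2 l0 by (simp add: field_simps)
      finally show ?thesis .
    qed
  qed
  show ?thesis using l ml a6 a7 l0 a4 K by auto
next
  assume b1: "L2 = \<infinity>" and b2: "L1 < \<infinity>" and b3: "ereal \<mu>2 \<le> L1" and b4: "0 \<le> \<mu>2"
    and b6: "\<sigma> = (real_of_ereal L1 + \<mu>2) / (real_of_ereal L1)\<^sup>2" and b7: "\<sigma>p = 0"
  obtain l where l: "L1 = ereal l" using b2 b3 by (cases L1) auto
  have ml: "\<mu>1 < l" using L1 l by simp
  have l0: "0 < l" using ml mu1 by simp
  have K: "0 \<le> \<mu>1 * l + \<mu>2 * l + \<mu>1 * \<mu>2" using mu1 b4 l0 by simp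
  show ?thesis using l ml b6 b7 l0 b4 K by auto
next
  assume c1: "L2 = \<infinity>" and c2: "- \<mu>2 < \<mu>1" and c3: "0 < - \<mu>2"
    and c4: "\<sigma> = inverse (real_of_ereal L1) * (inverse \<mu>1 + inverse \<mu>2) /
             (inverse \<mu>1 + inverse \<mu>2 - inverse (real_of_ereal L1))" and c5: "\<sigma>p = 0"
  have "L1 \<noteq> \<infinity>" using one_smooth c1 by simp
  then obtain l where l: "L1 = ereal l" using L1 by (cases L1) auto
  have ml: "\<mu>1 < l" using L1 l by simp
  have m1: "0 < \<mu>1" using c2 c3 by simp
  have l0: "0 < l" using ml m1 by simp
  have T0: "(\<mu>1 + \<mu>2) * l - \<mu>1 * \<mu>2 > 0"
  proof -
    have "(\<mu>1 + \<mu>2) * l > 0" using c2 l0 by simp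
    moreover have "\<mu>1 * \<mu>2 < 0" using m1 c3 by (simp add: mult_pos_neg)
    ultimately show ?thesis by linarith
  qed
  have e1: "inverse l * (inverse \<mu>1 + inverse \<mu>2) = (\<mu>1 + \<mu>2) / (\<mu>1 * \<mu>2 * l)"
    using m1 c3 l0 by (simp add: field_simps)
  have e2: "inverse \<mu>1 + inverse \<mu>2 - inverse l = ((\<mu>1 + \<mu>2) * l - \<mu>1 * \<mu>2) / (\<mu>1 * \<mu>2 * l)"
    using m1 c3 l0 by (simp add: field_simps)
  have nz: "\<mu>1 * \<mu>2 * l \<noteq> 0" using m1 c3 l0 by simp
  have "\<sigma> = (\<mu>1 + \<mu>2) / ((\<mu>1 + \<mu>2) * l - \<mu>1 * \<mu>2)"
    unfolding c4 l real_of_ereal.simps e1 e2 using nz T0 by simp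
  then show ?thesis using l ml c5 c2 by auto
next
  assume d1: "L1 = \<infinity>" and d2: "- \<mu>2 < \<mu>1" and d3: "0 < - \<mu>2"
    and d4: "0 < ereal (inverse \<mu>1) + ereal (inverse \<mu>2) + inverse L2"
    and d5: "\<sigma> = 0" and d6: "\<sigma>p = (\<mu>1 + \<mu>2) / \<mu>2\<^sup>2"
  have "L2 \<noteq> \<infinity>" using one_smooth d1 by simp
  then obtain l where l: "L2 = ereal l" using L2 by (cases L2) auto
  have ml: "\<mu>2 < l" using L2 l by simp
  have m1: "0 < \<mu>1" using d2 d3 by simp
  have neg: "inverse \<mu>1 + inverse \<mu>2 < 0"
  proof -
    have "inverse \<mu>1 < inverse (- \<mu>2)" using d2 d3 by (intro less_imp_inverse_less) auto
    then show ?thesis by simp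
  qed
  have K: "\<mu>1 * l + \<mu>2 * l + \<mu>1 * \<mu>2 \<le> 0"
  proof (cases "l = 0")
    case True then show ?thesis using m1 d3 by (simp add: mult_pos_neg less_imp_le)
  next
    case False
    then have pos: "0 < inverse \<mu>1 + inverse \<mu>2 + inverse l" using d4 unfolding l by simp
    then have "0 < inverse l" using neg by linarith
    then have l0: "0 < l" by simp
    have "(\<mu>1 * l * (- \<mu>2)) * (inverse \<mu>1 + inverse \<mu>2 + inverse l) > 0"
      using pos m1 l0 d3 by (intro mult_pos_pos) auto
    also have "(\<mu>1 * l * (- \<mu>2)) * (inverse \<mu>1 + inverse \<mu>2 + inverse l) = - (\<mu>1 * l + \<mu>2 * l + \<mu>1 * \<mu>2)"
      using m1 l0 d3 by (simp add: field_simps)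
    finally show ?thesis by simp
  qed
  show ?thesis using l ml d5 d6 d2 d3 K by auto
qed

theorem corollary2:
  fixes f1 f2 :: "'a::euclidean_space \<Rightarrow> real"
    and \<mu>1 \<mu>2 :: real and L1 L2 :: ereal
    and N :: nat and x g1 g2 :: "nat \<Rightarrow> 'a"
    and \<sigma> \<sigma>p :: real
  assumes L1: "ereal \<mu>1 < L1" and L2: "ereal \<mu>2 < L2"
    and f1: "f1 \<in> FmuL \<mu>1 L1" and f2: "f2 \<in> FmuL \<mu>2 L2"
    and mu1: "\<mu>1 \<ge> 0"
    and bdd: "bdd_below (range (\<lambda>w. f1 w - f2 w))"
    and dom_ne: "dom_subdiff \<mu>1 f1 \<noteq> {}"
    and dom_sub: "dom_subdiff \<mu>1 f1 \<subseteq> dom_subdiff \<mu>2 f2"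
    and range_sub: "range_subdiff \<mu>2 f2 \<subseteq> range_subdiff \<mu>1 f1"
    and one_smooth: "(L1 = \<infinity>) \<noteq> (L2 = \<infinity>)"
    and mus: "\<mu>1 + \<mu>2 > 0 \<or> (\<mu>1 = 0 \<and> \<mu>2 = 0)"
    and N: "N \<ge> 1"
    and g2: "\<And>k. k < N \<Longrightarrow> g2 k \<in> subdiff \<mu>2 f2 (x k)"
    and step: "\<And>k w. k < N \<Longrightarrow> f1 (x (Suc k)) - g2 k \<bullet> x (Suc k) \<le> f1 w - g2 k \<bullet> w"
    and g1: "\<And>k. k < N \<Longrightarrow> g1 (Suc k) = g2 k"
    and g1_0: "g1 0 \<in> subdiff \<mu>1 f1 (x 0)"
    and g2_N: "g2 N \<in> subdiff \<mu>2 f2 (x N)"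
    and dom: "dca_domain \<mu>1 \<mu>2 L1 L2 \<sigma> \<sigma>p"
  shows "(MIN k\<in>{0..N}. 1/2 * (norm (g1 k - g2 k))\<^sup>2)
           \<le> ((f1 (x 0) - f2 (x 0)) - (f1 (x N) - f2 (x N))) / ((\<sigma> + \<sigma>p) * real N)
       \<and> (L1 > ereal \<mu>2 \<longrightarrow>
           (MIN k\<in>{0..N}. 1/2 * (norm (g1 k - g2 k))\<^sup>2)
             \<le> ((f1 (x 0) - f2 (x 0)) - (INF w. f1 w - f2 w))
                 / ((\<sigma> + \<sigma>p) * real N + real_of_ereal (inverse (L1 - ereal \<mu>2))))"
proof -
  define F where "F = (\<lambda>w. f1 w - f2 w)"
  define d where "d = (\<lambda>k. 1/2 * (norm (g1 k - g2 k))\<^sup>2)"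
  define m where "m = (MIN k\<in>{0..N}. d k)"
  have mle: "m \<le> d k" if "k \<le> N" for k
    unfolding m_def using that by (intro Min_le) auto
  have sub1: "g1 k \<in> subdiff \<mu>1 f1 (x k)" if "k \<le> N" for k
  proof (cases k)
    case 0 then show ?thesis using g1_0 by simp
  next
    case (Suc j)
    then have j: "j < N" using that by simp
    have "g2 j \<in> subdiff \<mu>1 f1 (x (Suc j))"
      by (rule argmin_subdiff[OF f1 step[OF j]])
    then show ?thesis using g1[OF j] Suc by simp
  qed
  have sub2: "g2 k \<in> subdiff \<mu>2 f2 (x k)" if "k \<le> N" for k
    using g2 g2_N that by (cases "k = N") auto
  have pr: "(\<exists>l. L2 = ereal l \<and> \<mu>2 < l \<and> \<sigma> = 0 \<and>
            ((0 < l \<and> 0 \<le> \<mu>1 \<and> 0 \<le> \<mu>1 * l + \<mu>2 * l + \<mu>1 * \<mu>2 \<and> \<sigma>p = (l + \<mu>1) / l\<^sup>2)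
           \<or> (\<mu>2 < 0 \<and> 0 < \<mu>1 + \<mu>2 \<and> \<mu>1 * l + \<mu>2 * l + \<mu>1 * \<mu>2 \<le> 0 \<and> \<sigma>p = (\<mu>1 + \<mu>2) / \<mu>2\<^sup>2)))
       \<or> (\<exists>l. L1 = ereal l \<and> \<mu>1 < l \<and> \<sigma>p = 0 \<and>
            ((0 < l \<and> 0 \<le> \<mu>2 \<and> 0 \<le> \<mu>1 * l + \<mu>2 * l + \<mu>1 * \<mu>2 \<and> \<sigma> = (l + \<mu>2) / l\<^sup>2)
           \<or> (0 < \<mu>1 + \<mu>2 \<and> \<sigma> = (\<mu>1 + \<mu>2) / ((\<mu>1 + \<mu>2) * l - \<mu>1 * \<mu>2))))"
    by (rule params[OF L1 L2 mu1 one_smooth mus dom])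
  have sig: "0 \<le> \<sigma> \<and> 0 \<le> \<sigma>p \<and> 0 < \<sigma> + \<sigma>p"
    using pr
  proof (elim disjE exE conjE)
    fix l assume "\<sigma> = 0" "0 < l" "0 \<le> \<mu>1" "\<sigma>p = (l + \<mu>1) / l\<^sup>2"
    then show ?thesis by simp
  next
    fix l assume "\<sigma> = 0" "\<mu>2 < 0" "0 < \<mu>1 + \<mu>2" "\<sigma>p = (\<mu>1 + \<mu>2) / \<mu>2\<^sup>2"
    then show ?thesis by simp
  next
    fix l assume "\<sigma>p = 0" "0 < l" "0 \<le> \<mu>2" "\<sigma> = (l + \<mu>2) / l\<^sup>2"
    then show ?thesis by simp
  next
    fix l assume a: "\<sigma>p = 0" "\<mu>1 < l" "0 < \<mu>1 + \<mu>2" "\<sigma> = (\<mu>1 + \<mu>2) / ((\<mu>1 + \<mu>2) * l - \<mu>1 * \<mu>2)"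
    have "(\<mu>1 + \<mu>2) * (l - \<mu>1) > 0" using a by (intro mult_pos_pos) auto
    moreover have "\<mu>1 * \<mu>1 \<ge> 0" by simp
    moreover have "(\<mu>1 + \<mu>2) * l - \<mu>1 * \<mu>2 = (\<mu>1 + \<mu>2) * (l - \<mu>1) + \<mu>1 * \<mu>1" by (simp add: algebra_simps)
    ultimately have "(\<mu>1 + \<mu>2) * l - \<mu>1 * \<mu>2 > 0" by linarith
    then show ?thesis using a by simp
  qed
  have one: "\<sigma> * d k + \<sigma>p * d (Suc k) \<le> F (x k) - F (x (Suc k))" if k: "k < N" for k
    using pr
  proof
    assume "\<exists>l. L2 = ereal l \<and> \<mu>2 < l \<and> \<sigma> = 0 \<and> ((0 < l \<and> 0 \<le> \<mu>1 \<and> 0 \<le> \<mu>1 * l + \<mu>2 * l + \<mu>1 * \<mu>2 \<and> \<sigma>p = (l + \<mu>1) / l\<^sup>2)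
           \<or> (\<mu>2 < 0 \<and> 0 < \<mu>1 + \<mu>2 \<and> \<mu>1 * l + \<mu>2 * l + \<mu>1 * \<mu>2 \<le> 0 \<and> \<sigma>p = (\<mu>1 + \<mu>2) / \<mu>2\<^sup>2))"
    then obtain l where L2e: "L2 = ereal l" and ml: "\<mu>2 < l" and s0: "\<sigma> = 0" and cs: "(0 < l \<and> 0 \<le> \<mu>1 \<and> 0 \<le> \<mu>1 * l + \<mu>2 * l + \<mu>1 * \<mu>2 \<and> \<sigma>p = (l + \<mu>1) / l\<^sup>2)
           \<or> (\<mu>2 < 0 \<and> 0 < \<mu>1 + \<mu>2 \<and> \<mu>1 * l + \<mu>2 * l + \<mu>1 * \<mu>2 \<le> 0 \<and> \<sigma>p = (\<mu>1 + \<mu>2) / \<mu>2\<^sup>2)" by blast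
    have f2': "f2 \<in> FmuL \<mu>2 (ereal l)" using f2 L2e by simp
    have gy1: "g2 k \<in> subdiff \<mu>1 f1 (x (Suc k))" using sub1[of "Suc k"] g1[OF k] k by simp
    have "\<sigma>p / 2 * (norm (g2 k - g2 (Suc k)))\<^sup>2 \<le> (f1 (x k) - f2 (x k)) - (f1 (x (Suc k)) - f2 (x (Suc k)))"
      by (rule step_ad[OF f2' ml gy1 sub2 sub2 cs]) (use k in auto)
    then show ?thesis using s0 g1[OF k] unfolding d_def F_def by simp
  next
    assume "\<exists>l. L1 = ereal l \<and> \<mu>1 < l \<and> \<sigma>p = 0 \<and> ((0 < l \<and> 0 \<le> \<mu>2 \<and> 0 \<le> \<mu>1 * l + \<mu>2 * l + \<mu>1 * \<mu>2 \<and> \<sigma> = (l + \<mu>2) / l\<^sup>2)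
           \<or> (0 < \<mu>1 + \<mu>2 \<and> \<sigma> = (\<mu>1 + \<mu>2) / ((\<mu>1 + \<mu>2) * l - \<mu>1 * \<mu>2)))"
    then obtain l where L1e: "L1 = ereal l" and ml: "\<mu>1 < l" and s0: "\<sigma>p = 0" and cs: "(0 < l \<and> 0 \<le> \<mu>2 \<and> 0 \<le> \<mu>1 * l + \<mu>2 * l + \<mu>1 * \<mu>2 \<and> \<sigma> = (l + \<mu>2) / l\<^sup>2)
           \<or> (0 < \<mu>1 + \<mu>2 \<and> \<sigma> = (\<mu>1 + \<mu>2) / ((\<mu>1 + \<mu>2) * l - \<mu>1 * \<mu>2))" by blast
    have f1': "f1 \<in> FmuL \<mu>1 (ereal l)" using f1 L1e by simp
    have gy1: "g2 k \<in> subdiff \<mu>1 f1 (x (Suc k))" using sub1[of "Suc k"] g1[OF k] k by simp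
    have "\<sigma> / 2 * (norm (g1 k - g2 k))\<^sup>2 \<le> (f1 (x k) - f2 (x k)) - (f1 (x (Suc k)) - f2 (x (Suc k)))"
      by (rule step_bc[OF f1' ml sub1 gy1 sub2 cs]) (use k in auto)
    then show ?thesis using s0 unfolding d_def F_def by simp
  qed
  have tele: "real n * ((\<sigma> + \<sigma>p) * m) \<le> F (x 0) - F (x n)" if "n \<le> N" for n
    using that
  proof (induction n)
    case 0 then show ?case by simp
  next
    case (Suc n)
    then have n: "n < N" by simp
    have IH: "real n * ((\<sigma> + \<sigma>p) * m) \<le> F (x 0) - F (x n)" using Suc by simp
    have "\<sigma> * m \<le> \<sigma> * d n" using sig mle[of n] n by (intro mult_left_mono) auto
    moreover have "\<sigma>p * m \<le> \<sigma>p * d (Suc n)" using sig mle[of "Suc n"] n by (intro mult_left_mono) auto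
    moreover note one[OF n]
    ultimately have "(\<sigma> + \<sigma>p) * m \<le> F (x n) - F (x (Suc n))" by (simp add: algebra_simps)
    with IH show ?case by (simp add: algebra_simps)
  qed
  have T: "real N * ((\<sigma> + \<sigma>p) * m) \<le> F (x 0) - F (x N)" by (rule tele) simp
  have Npos: "(\<sigma> + \<sigma>p) * real N > 0" using sig N by simp
  have part1: "m \<le> (F (x 0) - F (x N)) / ((\<sigma> + \<sigma>p) * real N)"
    using T Npos by (simp add: pos_le_divide_eq algebra_simps)
  have Flo: "(INF w. F w) \<le> F w" for w
    by (rule cINF_lower) (use bdd in \<open>simp_all add: F_def\<close>)
  have part2: "m \<le> (F (x 0) - (INF w. F w)) / ((\<sigma> + \<sigma>p) * real N + real_of_ereal (inverse (L1 - ereal \<mu>2)))"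
    if Lm: "L1 > ereal \<mu>2"
  proof (cases "L1 = \<infinity>")
    case True
    then have "real_of_ereal (inverse (L1 - ereal \<mu>2)) = 0" by simp
    moreover have "F (x 0) - F (x N) \<le> F (x 0) - (INF w. F w)" using Flo[of "x N"] by simp
    ultimately show ?thesis using T Npos by (simp add: pos_le_divide_eq algebra_simps)
  next
    case False
    then obtain l where L1e: "L1 = ereal l" using L1 by (cases L1) auto
    have ml2: "\<mu>2 < l" using Lm L1e by simp
    have ml1: "\<mu>1 \<le> l" using L1 L1e by simp
    define c where "c = 1 / (l - \<mu>2)"
    have c0: "c > 0" using ml2 by (simp add: c_def)
    have cinv: "real_of_ereal (inverse (L1 - ereal \<mu>2)) = c" unfolding L1e c_def by (simp add: inverse_eq_divide)
    have f1': "f1 \<in> FmuL \<mu>1 (ereal l)" using f1 L1e by simp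
    define D where "D = g1 N - g2 N"
    define w where "w = x N - c *\<^sub>R D"
    have A: "f1 w \<le> f1 (x N) + g1 N \<bullet> (w - x N) + l / 2 * (norm (w - x N))\<^sup>2"
      by (rule descent[OF f1' ml1 sub1]) simp
    have B: "f2 (x N) + g2 N \<bullet> (w - x N) + \<mu>2 / 2 * (norm (w - x N))\<^sup>2 \<le> f2 w"
      by (rule sub_lower[OF sub2]) simp
    have wx: "w - x N = - (c *\<^sub>R D)" by (simp add: w_def)
    have ip: "g1 N \<bullet> (w - x N) - g2 N \<bullet> (w - x N) = - (c * (norm D)\<^sup>2)"
      unfolding wx D_def power2_norm_eq_inner by (simp add: inner_diff_left inner_diff_right algebra_simps)
    have nn: "(norm (w - x N))\<^sup>2 = c\<^sup>2 * (norm D)\<^sup>2" unfolding wx by (simp add: power_mult_distrib abs_of_pos c0)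
    have key: "l / 2 * (c\<^sup>2 * (norm D)\<^sup>2) - \<mu>2 / 2 * (c\<^sup>2 * (norm D)\<^sup>2) = c * (norm D)\<^sup>2 / 2"
    proof -
      have lc: "(l - \<mu>2) * c = 1" using ml2 by (simp add: c_def)
      have "l / 2 * (c\<^sup>2 * (norm D)\<^sup>2) - \<mu>2 / 2 * (c\<^sup>2 * (norm D)\<^sup>2) = ((l - \<mu>2) * c) * c / 2 * (norm D)\<^sup>2"
        by (simp add: power2_eq_square algebra_simps)
      then show ?thesis using lc by simp
    qed
    have "F w \<le> F (x N) - c * (norm D)\<^sup>2 / 2"
      using A[unfolded nn] B[unfolded nn] ip key unfolding F_def by linarith
    then have FN: "(INF w. F w) \<le> F (x N) - c * d N" using Flo[of w] unfolding d_def D_def by simp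
    have "c * m \<le> c * d N" using mle[of N] c0 by simp
    then have "real N * ((\<sigma> + \<sigma>p) * m) + c * m \<le> F (x 0) - (INF w. F w)" using T FN by linarith
    moreover have "(\<sigma> + \<sigma>p) * real N + c > 0" using Npos c0 by simp
    ultimately show ?thesis unfolding cinv by (simp add: pos_le_divide_eq algebra_simps)
  qed
  show ?thesis using part1 part2 unfolding m_def d_def F_def by simp
qed

end
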